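(* Let $\theta\le0$ be such that $F_\theta(t_1,t_2)=t_1^{\,1+\theta\log t_2}\,t_2$, $0<t_1,t_2<1$, is a bivariate distribution function. Let $X=(X_1,X_2)$ be a nonnegative bivariate random vector with absolutely continuous distribution function $F$ supported in $(0,1)^2$, finite $\overline\varepsilon^*_i(X;t_1,t_2)$ and bivariate EIT components $m_i^X(t_1,t_2)$. Then $$\overline\varepsilon^*_i(X;t_1,t_2)=\left(\frac{1+\theta\log t_j}{2+\theta\log t_j}\right)m_i^X(t_1,t_2),\qquad i,j\in\{1,2\},\ i\ne j,$$ holds for all $0<t_1,t_2<1$ if and only if $F=F_\theta$, i.e. $F(t_1,t_2)=t_1^{\,1+\theta\log t_2}\,t_2$ for $0<t_1,t_2<1$.
   Context: Let $F(x_1,x_2)=P(X_1\le x_1,X_2\le x_2)$. For $t_1,t_2>0$ with $F(t_1,t_2)>0$ define the conditional dynamic cumulative past entropies (CDCPE) $$\overline\varepsilon^*_1(X;t_1,t_2)=-\int_0^{t_1}\frac{F(x_1,t_2)}{F(t_1,t_2)}\log\frac{F(x_1,t_2)}{F(t_1,t_2)}dx_1,\qquad \overline\varepsilon^*_2(X;t_1,t_2)=-\int_0^{t_2}\frac{F(t_1,x_2)}{F(t_1,t_2)}\log\frac{F(t_1,x_2)}{F(t_1,t_2)}dx_2,$$ and the components of the bivariate expected inactivity time $m_1^X(t_1,t_2)=\frac{1}{F(t_1,t_2)}\int_0^{t_1}F(x_1,t_2)dx_1$, $m_2^X(t_1,t_2)=\frac{1}{F(t_1,t_2)}\int_0^{t_2}F(t_1,x_2)dx_2$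 (i.e. $m_i^X(t_1,t_2)=E(t_i-X_i\mid X_1<t_1,X_2<t_2)$). *)

theory Defs
  imports "HOL-Probability.Probability"
begin

definition abs_cont_df_unit_sq :: "(real \<Rightarrow> real \<Rightarrow> real) \<Rightarrow> bool" where
  "abs_cont_df_unit_sq F \<longleftrightarrow>
     (\<exists>f :: real \<times> real \<Rightarrow> real.
        (\<forall>z. 0 \<le> f z) \<and>
        (\<forall>z. z \<notin> {0<..<1} \<times> {0<..<1} \<longrightarrow> f z = 0) \<and>
        (f has_integral 1) UNIV \<and>
        (\<forall>x1 x2. (f has_integral F x1 x2) ({..x1} \<times> {..x2})))"

definition is_bivariate_df_on_unit_sq :: "(real \<Rightarrow> real \<Rightarrow> real) \<Rightarrow> bool" where
  "is_bivariate_df_on_unit_sq G \<longleftrightarrow>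
     (\<exists>M :: (real \<times> real) measure. prob_space M \<and> sets M = sets borel \<and>
        (\<forall>t1 t2. 0 < t1 \<and> t1 < 1 \<and> 0 < t2 \<and> t2 < 1 \<longrightarrow>
            G t1 t2 = measure M ({..t1} \<times> {..t2})))"

definition F_theta :: "real \<Rightarrow> real \<Rightarrow> real \<Rightarrow> real" where
  "F_theta \<theta> t1 t2 = t1 powr (1 + \<theta> * ln t2) * t2"

definition cdcpe1 :: "(real \<Rightarrow> real \<Rightarrow> real) \<Rightarrow> real \<Rightarrow> real \<Rightarrow> real" where
  "cdcpe1 F t1 t2 = - integral {0..t1}
      (\<lambda>x1. (F x1 t2 / F t1 t2) * ln (F x1 t2 / F t1 t2))"

definition cdcpe2 :: "(real \<Rightarrow> real \<Rightarrow> real) \<Rightarrow> real \<Rightarrow> real \<Rightarrow> real" where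
  "cdcpe2 F t1 t2 = - integral {0..t2}
      (\<lambda>x2. (F t1 x2 / F t1 t2) * ln (F t1 x2 / F t1 t2))"

definition eit1 :: "(real \<Rightarrow> real \<Rightarrow> real) \<Rightarrow> real \<Rightarrow> real \<Rightarrow> real" where
  "eit1 F t1 t2 = integral {0..t1} (\<lambda>x1. F x1 t2) / F t1 t2"

definition eit2 :: "(real \<Rightarrow> real \<Rightarrow> real) \<Rightarrow> real \<Rightarrow> real \<Rightarrow> real" where
  "eit2 F t1 t2 = integral {0..t2} (\<lambda>x2. F t1 x2) / F t1 t2"

end

theory Submission imports Defs "HOL-Real_Asymp.Real_Asymp" begin


lemma key_1d:
  fixes G :: "real \<Rightarrow> real" and c :: real
  assumes c1: "c < 1"
  and mono: "\<And>x y. 0 \<le> x \<Longrightarrow> x \<le> y \<Longrightarrow> G x \<le> G y"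
  and G0: "G 0 = 0"
  and pos: "\<And>x. 0 < x \<Longrightarrow> x < 1 \<Longrightarrow> 0 < G x"
  and hint: "\<And>t. 0<t \<Longrightarrow> t<1 \<Longrightarrow> (\<lambda>x. G x / G t * ln (G x / G t)) integrable_on {0..t}"
  and heq: "\<And>t. 0<t \<Longrightarrow> t<1 \<Longrightarrow> - integral {0..t} (\<lambda>x. G x / G t * ln (G x / G t)) = c * (integral {0..t} G / G t)"
  shows "\<exists>K. \<forall>x. 0<x \<longrightarrow> x<1 \<longrightarrow> G x = K * x powr (c/(1-c))"
proof -
  define A where "A t = integral {0..t} G" for t
  define \<phi> where "\<phi> x = G x * ln (G x)" for x
  define B where "B t = integral {0..t} \<phi>" for t
  have Gnn: "0 \<le> G x" if "0 \<le> x" for x using mono[of 0 x] that G0 by simp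
  have intG: "G integrable_on {0..t}" for t
    by (rule integrable_on_mono_on) (auto simp: mono_on_def intro: mono)
  have pw: "G x / G t * ln (G x / G t) = (\<phi> x - ln (G t) * G x) / G t"
    if "0<t" "t<1" "0 \<le> x" for x t
  proof (cases "G x = 0")
    case True then show ?thesis by (simp add: \<phi>_def)
  next
    case False
    then have "G x > 0" using Gnn[OF \<open>0 \<le> x\<close>] by simp
    moreover have "G t > 0" using pos that by simp
    ultimately show ?thesis by (simp add: \<phi>_def ln_div field_simps)
  qed
  have intphi: "\<phi> integrable_on {0..t}" if "0<t" "t<1" for t
  proof -
    have "(\<lambda>x. G t * (G x / G t * ln (G x / G t)) + ln (G t) * G x) integrable_on {0..t}"
      using integrable_add[OF integrable_on_cmult_left[OF hint[OF that], of "G t"]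
          integrable_on_cmult_left[OF intG, of "ln (G t)"]] by simp
    moreover have "G t * (G x / G t * ln (G x / G t)) + ln (G t) * G x = \<phi> x" if "x \<in> {0..t}" for x
      using pw[of t x] that \<open>0<t\<close> \<open>t<1\<close> pos[of t] by (simp add: field_simps)
    ultimately show ?thesis by (rule integrable_eq)
  qed
  have eqn: "ln (G t) * A t - B t = c * A t" if "0<t" "t<1" for t
  proof -
    have "integral {0..t} (\<lambda>x. G x / G t * ln (G x / G t))
        = integral {0..t} (\<lambda>x. (1 / G t) * (\<phi> x - ln (G t) * G x))"
      by (rule integral_cong) (use pw that in auto)
    also have "\<dots> = (1 / G t) * (B t - ln (G t) * A t)"
    proof -
      have i2: "(\<lambda>x. ln (G t) * G x) integrable_on {0..t}"
        using integrable_on_cmult_left[OF intG, of "ln (G t)"] by simp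
      show ?thesis unfolding A_def B_def
        by (simp add: integral_diff[OF intphi[OF that] i2])
    qed
    finally have I: "integral {0..t} (\<lambda>x. G x / G t * ln (G x / G t)) = (1 / G t) * (B t - ln (G t) * A t)" .
    have h: "- integral {0..t} (\<lambda>x. G x / G t * ln (G x / G t)) = c * (A t / G t)"
      using heq[OF that] by (simp only: A_def)
    then have "- ((1 / G t) * (B t - ln (G t) * A t)) = c * (A t / G t)" by (simp only: I)
    then have "(ln (G t) * A t - B t - c * A t) * G t = 0" using pos[OF that]
      by (simp add: field_simps)
    then show ?thesis using pos[OF that] by simp
  qed
  have Apos: "A t > 0" if "0<t" "t<1" for t
  proof -
    have "integral {0..t/2} G \<ge> 0" using Gnn by (intro integral_nonneg intG) auto
    moreover have "integral {t/2..t} G \<ge> integral {t/2..t} (\<lambda>_. G (t/2))"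
      using intG that by (intro integral_le integrable_on_subinterval[OF intG[of t]] mono) auto
    moreover have "integral {t/2..t} (\<lambda>_. G (t/2)) = t/2 * G (t/2)" using that by simp
    moreover have "t/2 * G (t/2) > 0" using pos[of "t/2"] that by simp
    moreover have "integral {0..t/2} G + integral {t/2..t} G = A t"
      unfolding A_def by (rule Henstock_Kurzweil_Integration.integral_combine[OF _ _ intG]) (use that in auto)
    ultimately show ?thesis by linarith
  qed
  have lnG: "ln (G t) = c + B t / A t" if "0<t" "t<1" for t
    using eqn[OF that] Apos[OF that] by (simp add: field_simps)
  have Gexp: "G t = exp (c + B t / A t)" if "0<t" "t<1" for t
    using lnG[OF that] pos[OF that] by (metis exp_ln)
  have contAB: "isCont A t \<and> isCont B t" if "0<t" "t<1" for t
  proof -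
    let ?t0 = "(1+t)/2"
    have "continuous_on {0..?t0} A" unfolding A_def by (rule indefinite_integral_continuous_1[OF intG])
    moreover have "continuous_on {0..?t0} B" unfolding B_def
      by (rule indefinite_integral_continuous_1[OF intphi]) (use that in auto)
    moreover have "t \<in> interior {0..?t0}" using that by simp
    ultimately show ?thesis using continuous_on_interior by blast
  qed
  have contG: "isCont G t" if "0<t" "t<1" for t
  proof -
    have "eventually (\<lambda>x. x \<in> {0<..<1}) (nhds t)"
      using that by (intro eventually_nhds_in_open) auto
    then have "eventually (\<lambda>x. G x = exp (c + B x / A x)) (nhds t)"
      by eventually_elim (use Gexp in auto)
    moreover have "isCont (\<lambda>x. exp (c + B x / A x)) t"
      using contAB[OF that] Apos[OF that] by (auto intro!: continuous_intros)
    ultimately show ?thesis using isCont_cong[of G "\<lambda>x. exp (c + B x / A x)" t] by blast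
  qed
  have derA: "(A has_real_derivative G t) (at t)" and derB: "(B has_real_derivative \<phi> t) (at t)"
    if "0<t" "t<1" for t
  proof -
    let ?t0 = "(1+t)/2"
    have ti: "t \<in> interior {0..?t0}" using that by simp
    have tin: "t \<in> {0..?t0} - {}" using that by simp
    have "((\<lambda>u. integral {0..u} G) has_vector_derivative G t) (at t within ({0..?t0} - {}))"
      by (rule integral_has_vector_derivative_continuous_at[OF intG tin])
         (use contG[OF that] continuous_at_imp_continuous_within in auto)
    then show "(A has_real_derivative G t) (at t)"
      using at_within_interior[OF ti] unfolding A_def
      by (simp add: has_real_derivative_iff_has_vector_derivative)
    have cphi: "isCont \<phi> t" unfolding \<phi>_def
      using contG[OF that] pos[OF that] by (auto intro!: continuous_intros)
    have "((\<lambda>u. integral {0..u} \<phi>) has_vector_derivative \<phi> t) (at t within ({0..?t0} - {}))"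
      by (rule integral_has_vector_derivative_continuous_at[OF intphi tin])
         (use that cphi continuous_at_imp_continuous_within in auto)
    then show "(B has_real_derivative \<phi> t) (at t)"
      using at_within_interior[OF ti] unfolding B_def
      by (simp add: has_real_derivative_iff_has_vector_derivative)
  qed
  define Q where "Q t = B t / A t - c * ln (A t)" for t
  have derQ: "(Q has_real_derivative 0) (at t)" if "0<t" "t<1" for t
  proof -
    have "(Q has_real_derivative ((\<phi> t * A t - B t * G t) / (A t * A t) - c * (G t / A t))) (at t)"
      unfolding Q_def using derA[OF that] derB[OF that] Apos[OF that]
      by (auto intro!: derivative_eq_intros simp: power2_eq_square)
    moreover have "(\<phi> t * A t - B t * G t) / (A t * A t) - c * (G t / A t) = 0"
    proof -
      have "\<phi> t * A t - B t * G t = G t * (ln (G t) * A t - B t)" by (simp add: \<phi>_def algebra_simps)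
      also have "\<dots> = c * G t * A t" using eqn[OF that] by simp
      finally show ?thesis using Apos[OF that] by (simp add: field_simps)
    qed
    ultimately show ?thesis by simp
  qed
  obtain k where k: "\<And>t. t \<in> {0<..<1} \<Longrightarrow> Q t = k"
    using has_field_derivative_zero_constant[of "{0<..<1::real}" Q]
      derQ has_field_derivative_at_within by force
  define E where "E = exp (c + k)"
  have Epos: "E > 0" unfolding E_def by simp
  have GA: "G t = E * A t powr c" if "0<t" "t<1" for t
  proof -
    have "B t / A t = k + c * ln (A t)" using k[of t] that unfolding Q_def by simp
    then have "ln (G t) = c + k + c * ln (A t)" using lnG[OF that] by simp
    then have "G t = exp (c + k + c * ln (A t))" using pos[OF that] by (metis exp_ln)
    then show ?thesis using Apos[OF that] unfolding E_def powr_def by (simp add: exp_add)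
  qed
  define R where "R t = A t powr (1-c) - (1-c) * E * t" for t
  have derR: "(R has_real_derivative 0) (at t)" if "0<t" "t<1" for t
  proof -
    have "(R has_real_derivative ((1-c) * A t powr (1-c-1) * G t - (1-c) * E)) (at t)"
      unfolding R_def using derA[OF that] Apos[OF that]
      by (auto intro!: derivative_eq_intros DERIV_fun_powr)
    moreover have "(1-c) * A t powr (1-c-1) * G t - (1-c) * E = 0"
    proof -
      have "A t powr (1-c-1) * A t powr c = 1" using Apos[OF that]
        by (simp add: powr_add[symmetric])
      then show ?thesis using GA[OF that] by (simp add: algebra_simps)
    qed
    ultimately show ?thesis by metis
  qed
  obtain D where D: "\<And>t. t \<in> {0<..<1} \<Longrightarrow> R t = D"
    using has_field_derivative_zero_constant[of "{0<..<1::real}" R]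
      derR has_field_derivative_at_within by force
  have A0: "(A \<longlongrightarrow> 0) (at_right 0)"
  proof -
    have "continuous_on {0..1/2} A" unfolding A_def by (rule indefinite_integral_continuous_1[OF intG])
    then have "(A \<longlongrightarrow> A 0) (at_right 0)" by (rule continuous_on_Icc_at_rightD) simp
    then show ?thesis unfolding A_def by simp
  qed
  have "(R \<longlongrightarrow> 0 - (1-c) * E * 0) (at_right 0)"
    unfolding R_def
    by (intro tendsto_intros tendsto_zero_powrI[OF A0] eventually_at_rightI[of 0 "1/2"])
       (use c1 Apos in \<open>auto simp: less_imp_le\<close>)
  moreover have "(R \<longlongrightarrow> D) (at_right 0)"
  proof -
    have "eventually (\<lambda>t. D = R t) (at_right (0::real))"
      by (rule eventually_at_rightI[of 0 1]) (use D in auto)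
    then show ?thesis by (rule Lim_transform_eventually[OF tendsto_const])
  qed
  ultimately have D0: "D = 0" using tendsto_unique[OF trivial_limit_at_right_real] by force
  show ?thesis
  proof (intro exI allI impI)
    fix x :: real assume x: "0 < x" "x < 1"
    have "A x powr (1-c) = (1-c) * E * x" using D[of x] D0 x unfolding R_def by simp
    moreover have "A x = (A x powr (1-c)) powr (1/(1-c))"
      using Apos[OF x] c1 by (simp add: powr_powr)
    ultimately have "A x = ((1-c) * E * x) powr (1/(1-c))" by simp
    then have "A x powr c = ((1-c) * E * x) powr (c/(1-c))"
      using Apos[OF x] c1 Epos x by (simp add: powr_powr)
    then show "G x = (E * ((1-c) * E) powr (c/(1-c))) * x powr (c/(1-c))"
      using GA[OF x] c1 Epos x by (simp add: powr_mult)
  qed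
qed


lemma lim_aux: fixes a t :: real assumes "a > 0" "t > 0"
  shows "((\<lambda>x. a / t powr a * (x powr (a+1) * ((ln x - ln t)/(a+1) - 1/(a+1)^2))) \<longlongrightarrow> 0) (at_right 0)"
  using assms by real_asymp

lemma calc_int:
  fixes a t s :: real assumes a: "a > 0" and t: "t > 0" and s: "s > 0"
  shows "((\<lambda>x. x powr a * s) has_integral (s * (t powr (a+1) / (a+1)))) {0..t}"
    and "((\<lambda>x. (x powr a * s) / (t powr a * s) * ln ((x powr a * s) / (t powr a * s)))
          has_integral (- (a * t / (a+1)^2))) {0..t}"
proof -
  show "((\<lambda>x. x powr a * s) has_integral (s * (t powr (a+1) / (a+1)))) {0..t}"
    using has_integral_mult_left[OF has_integral_powr_from_0[of a t], of s] a t
    by (simp add: mult.commute)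
  define P where "P x = a / t powr a * (x powr (a+1) * ((ln x - ln t)/(a+1) - 1/(a+1)^2))" for x
  define g where "g x = a / t powr a * (x powr a * (ln x - ln t))" for x
  have cont: "continuous_on {0..t} P"
    unfolding continuous_on_eq_continuous_within
  proof
    fix x assume x: "x \<in> {0..t}"
    show "continuous (at x within {0..t}) P"
    proof (cases "x = 0")
      case True
      have "P 0 = 0" by (simp add: P_def)
      moreover have "(P \<longlongrightarrow> 0) (at_right 0)"
        using lim_aux[OF a t] unfolding P_def[abs_def] .
      ultimately show ?thesis using True t
        by (simp add: continuous_within at_within_Icc_at_right)
    next
      case False
      then have "x > 0" using x by simp
      then have "isCont P x" unfolding P_def using a t by (auto intro!: continuous_intros)
      then show ?thesis by (rule continuous_at_imp_continuous_within)
    qed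
  qed
  have der: "(P has_vector_derivative g x) (at x)" if "x \<in> {0<..<t}" for x
  proof -
    have x: "x > 0" using that by simp
    have "(P has_real_derivative a / t powr a * ((a+1) * x powr (a+1-1) * ((ln x - ln t)/(a+1) - 1/(a+1)^2)
        + x powr (a+1) * ((1/x)/(a+1)))) (at x)"
      unfolding P_def using x a t by (auto intro!: derivative_eq_intros DERIV_fun_powr)
    moreover have "a / t powr a * ((a+1) * x powr (a+1-1) * ((ln x - ln t)/(a+1) - 1/(a+1)^2)
        + x powr (a+1) * ((1/x)/(a+1))) = g x"
    proof -
      have e2: "x powr (a+1) * ((1/x)/(a+1)) = x powr a / (a+1)" using x by (simp add: powr_add)
      have e4: "b * y * (L/b - 1/b^2) + y / b = y * L" if "b \<noteq> 0" for y L b :: real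
        using that by (simp add: field_simps power2_eq_square)
      have e3: "(a+1) * y * (L/(a+1) - 1/(a+1)^2) + y / (a+1) = y * L" for y L :: real
        using a by (intro e4) auto
      show ?thesis unfolding g_def e2 using e3 by simp
    qed
    ultimately show ?thesis by (simp add: has_real_derivative_iff_has_vector_derivative)
  qed
  have "(g has_integral (P t - P 0)) {0..t}"
    by (rule fundamental_theorem_of_calculus_interior[OF _ cont der]) (use t in auto)
  moreover have "P t - P 0 = - (a * t / (a+1)^2)"
    unfolding P_def using t a by (simp add: powr_add field_simps)
  moreover have "g x = (x powr a * s) / (t powr a * s) * ln ((x powr a * s) / (t powr a * s))"
    if "x \<in> {0..t}" for x
  proof (cases "x = 0")
    case True then show ?thesis by (simp add: g_def)
  next
    case False
    then have x: "x > 0" using that by simp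
    then show ?thesis unfolding g_def using t s a
      by (simp add: ln_div ln_powr field_simps)
  qed
  ultimately show "((\<lambda>x. (x powr a * s) / (t powr a * s) * ln ((x powr a * s) / (t powr a * s)))
          has_integral (- (a * t / (a+1)^2))) {0..t}"
    using has_integral_eq by (metis (no_types, lifting))
qed


lemma swap_powr: fixes t y \<theta> :: real assumes "t > 0" "y > 0"
  shows "t powr (1 + \<theta> * ln y) * y = y powr (1 + \<theta> * ln t) * t"
  using assms by (simp add: powr_def exp_add algebra_simps)

lemma back1:
  fixes G :: "real \<Rightarrow> real" and a t s :: real
  assumes a: "a > 0" and t: "t > 0" and s: "s > 0" and G: "\<And>x. x \<in> {0..t} \<Longrightarrow> G x = x powr a * s"
  shows "- integral {0..t} (\<lambda>x. G x / G t * ln (G x / G t)) = (a/(a+1)) * (integral {0..t} G / G t)"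
proof -
  have Gt: "G t = t powr a * s" using G t by simp
  have "integral {0..t} (\<lambda>x. G x / G t * ln (G x / G t)) =
        integral {0..t} (\<lambda>x. (x powr a * s) / (t powr a * s) * ln ((x powr a * s) / (t powr a * s)))"
    by (rule integral_cong) (simp add: G Gt)
  also have "\<dots> = - (a * t / (a+1)^2)" using calc_int(2)[OF a t s] by (rule integral_unique)
  finally have i1: "integral {0..t} (\<lambda>x. G x / G t * ln (G x / G t)) = - (a * t / (a+1)^2)" .
  have "integral {0..t} G = integral {0..t} (\<lambda>x. x powr a * s)"
    by (rule integral_cong) (simp add: G)
  also have "\<dots> = s * (t powr (a+1) / (a+1))" using calc_int(1)[OF a t s] by (rule integral_unique)
  finally have i2: "integral {0..t} G = s * (t powr (a+1) / (a+1))" .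
  have tp: "t powr (a+1) = t powr a * t" using t by (simp add: powr_add)
  have "(a/(a+1)) * (s * (t powr a * t / (a+1)) / (t powr a * s)) = a * t / (a+1)^2"
  proof -
    have g: "(a/b) * (s * (T * t / b) / (T * s)) = a * t / b^2" if "b \<noteq> 0" "T \<noteq> 0" "s \<noteq> 0" for b T :: real
      using that by (simp add: field_simps power2_eq_square)
    show ?thesis using g[of "a+1" "t powr a"] a t s by simp
  qed
  then show ?thesis unfolding i1 i2 unfolding Gt tp by simp
qed

theorem mainTheorem15:
  fixes \<theta> :: real and F :: "real \<Rightarrow> real \<Rightarrow> real"
  assumes "\<theta> \<le> 0"
    and "is_bivariate_df_on_unit_sq (F_theta \<theta>)"
    and "abs_cont_df_unit_sq F"
    and "\<forall>t1 t2. 0 < t1 \<and> t1 < 1 \<and> 0 < t2 \<and> t2 < 1 \<longrightarrow> F t1 t2 > 0"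
    and "\<forall>t1 t2. 0 < t1 \<and> t1 < 1 \<and> 0 < t2 \<and> t2 < 1 \<longrightarrow>
           (\<lambda>x1. (F x1 t2 / F t1 t2) * ln (F x1 t2 / F t1 t2)) integrable_on {0..t1} \<and>
           (\<lambda>x2. (F t1 x2 / F t1 t2) * ln (F t1 x2 / F t1 t2)) integrable_on {0..t2}"
  shows "(\<forall>t1 t2. 0 < t1 \<and> t1 < 1 \<and> 0 < t2 \<and> t2 < 1 \<longrightarrow>
            cdcpe1 F t1 t2 = ((1 + \<theta> * ln t2) / (2 + \<theta> * ln t2)) * eit1 F t1 t2 \<and>
            cdcpe2 F t1 t2 = ((1 + \<theta> * ln t1) / (2 + \<theta> * ln t1)) * eit2 F t1 t2)
         \<longleftrightarrow> (\<forall>t1 t2. 0 < t1 \<and> t1 < 1 \<and> 0 < t2 \<and> t2 < 1 \<longrightarrow> F t1 t2 = F_theta \<theta> t1 t2)"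
proof -
  obtain f :: "real \<times> real \<Rightarrow> real" where f0: "\<And>z. 0 \<le> f z"
    and fsupp: "\<And>z. z \<notin> {0<..<1} \<times> {0<..<1} \<Longrightarrow> f z = 0"
    and f1: "(f has_integral 1) UNIV"
    and fF: "\<And>x1 x2. (f has_integral F x1 x2) ({..x1} \<times> {..x2})"
    using assms(3) unfolding abs_cont_df_unit_sq_def by blast
  have Fmono: "F x y \<le> F x' y'" if "x \<le> x'" "y \<le> y'" for x y x' y'
    by (rule has_integral_subset_le[OF _ fF fF]) (use that f0 in auto)
  have F0: "F x y = 0" if "x \<le> 0 \<or> y \<le> 0" for x y
  proof -
    have "(f has_integral 0) ({..x} \<times> {..y})"
      by (rule has_integral_is_0) (use that fsupp in force)
    then show ?thesis using fF has_integral_unique by blast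
  qed
  have ulog: "0 \<le> \<theta> * ln t" if "0 < t" "t < 1" for t
    using assms(1) that by (intro mult_nonpos_nonpos) auto
  show ?thesis
  proof
    assume H: "\<forall>t1 t2. 0 < t1 \<and> t1 < 1 \<and> 0 < t2 \<and> t2 < 1 \<longrightarrow>
            cdcpe1 F t1 t2 = ((1 + \<theta> * ln t2) / (2 + \<theta> * ln t2)) * eit1 F t1 t2 \<and>
            cdcpe2 F t1 t2 = ((1 + \<theta> * ln t1) / (2 + \<theta> * ln t1)) * eit2 F t1 t2"
    show "\<forall>t1 t2. 0 < t1 \<and> t1 < 1 \<and> 0 < t2 \<and> t2 < 1 \<longrightarrow> F t1 t2 = F_theta \<theta> t1 t2"
    proof -
    have sec1: "\<exists>K. \<forall>x. 0<x \<longrightarrow> x<1 \<longrightarrow> F x t2 = K * x powr (1 + \<theta> * ln t2)" if t2: "0<t2" "t2<1" for t2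
    proof -
      define c where "c = (1 + \<theta> * ln t2)/(2+\<theta> * ln t2)"
      have u: "0 \<le> \<theta> * ln t2" using ulog t2 by simp
      have c1: "c < 1" unfolding c_def using u by (simp add: field_simps)
      have cc: "c/(1-c) = 1 + \<theta> * ln t2" unfolding c_def using u by (simp add: field_simps)
      have "\<exists>K. \<forall>x. 0<x \<longrightarrow> x<1 \<longrightarrow> F x t2 = K * x powr (c/(1-c))"
      proof (rule key_1d[where G="\<lambda>x. F x t2", OF c1])
        show "\<And>x y. 0 \<le> x \<Longrightarrow> x \<le> y \<Longrightarrow> F x t2 \<le> F y t2" using Fmono by simp
        show "F 0 t2 = 0" using F0 by simp
        show "\<And>x. 0 < x \<Longrightarrow> x < 1 \<Longrightarrow> 0 < F x t2" using assms(4) t2 by simp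
        show "\<And>t. 0 < t \<Longrightarrow> t < 1 \<Longrightarrow> (\<lambda>x. F x t2 / F t t2 * ln (F x t2 / F t t2)) integrable_on {0..t}"
          using assms(5) t2 by simp
        show "\<And>t. 0 < t \<Longrightarrow> t < 1 \<Longrightarrow> - integral {0..t} (\<lambda>x. F x t2 / F t t2 * ln (F x t2 / F t t2))
                 = c * (integral {0..t} (\<lambda>x. F x t2) / F t t2)"
          using H t2 unfolding cdcpe1_def eit1_def c_def by simp
      qed
      then show ?thesis unfolding cc .
    qed
    have sec2: "\<exists>K. \<forall>y. 0<y \<longrightarrow> y<1 \<longrightarrow> F t1 y = K * y powr (1 + \<theta> * ln t1)" if t1: "0<t1" "t1<1" for t1
    proof -
      define c where "c = (1 + \<theta> * ln t1)/(2+\<theta> * ln t1)"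
      have u: "0 \<le> \<theta> * ln t1" using ulog t1 by simp
      have c1: "c < 1" unfolding c_def using u by (simp add: field_simps)
      have cc: "c/(1-c) = 1 + \<theta> * ln t1" unfolding c_def using u by (simp add: field_simps)
      have "\<exists>K. \<forall>y. 0<y \<longrightarrow> y<1 \<longrightarrow> F t1 y = K * y powr (c/(1-c))"
      proof (rule key_1d[where G="\<lambda>y. F t1 y", OF c1])
        show "\<And>x y. 0 \<le> x \<Longrightarrow> x \<le> y \<Longrightarrow> F t1 x \<le> F t1 y" using Fmono by simp
        show "F t1 0 = 0" using F0 by simp
        show "\<And>x. 0 < x \<Longrightarrow> x < 1 \<Longrightarrow> 0 < F t1 x" using assms(4) t1 by simp
        show "\<And>t. 0 < t \<Longrightarrow> t < 1 \<Longrightarrow> (\<lambda>x. F t1 x / F t1 t * ln (F t1 x / F t1 t)) integrable_on {0..t}"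
          using assms(5) t1 by simp
        show "\<And>t. 0 < t \<Longrightarrow> t < 1 \<Longrightarrow> - integral {0..t} (\<lambda>x. F t1 x / F t1 t * ln (F t1 x / F t1 t))
                 = c * (integral {0..t} (\<lambda>x. F t1 x) / F t1 t)"
          using H t1 unfolding cdcpe2_def eit2_def c_def by simp
      qed
      then show ?thesis unfolding cc .
    qed
    have Fth_pos: "F_theta \<theta> x y > 0" if "0 < x" "0 < y" for x y
      using that by (simp add: F_theta_def)
    have ratio1: "F x t2 / F_theta \<theta> x t2 = F (1/2) t2 / F_theta \<theta> (1/2) t2"
      if hh: "0<x" "x<1" "0<t2" "t2<1" for x t2
    proof -
      obtain K where K: "\<And>x. 0<x \<Longrightarrow> x<1 \<Longrightarrow> F x t2 = K * x powr (1 + \<theta> * ln t2)"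
        using sec1[of t2] hh by blast
      have "F z t2 / F_theta \<theta> z t2 = K / t2" if "0<z" "z<1" for z
        using K[OF that] that \<open>0<t2\<close> by (simp add: F_theta_def)
      then show ?thesis using that by simp
    qed
    have ratio2: "F t1 y / F_theta \<theta> t1 y = F t1 (1/2) / F_theta \<theta> t1 (1/2)"
      if hh: "0<y" "y<1" "0<t1" "t1<1" for y t1
    proof -
      obtain K where K: "\<And>y. 0<y \<Longrightarrow> y<1 \<Longrightarrow> F t1 y = K * y powr (1 + \<theta> * ln t1)"
        using sec2[of t1] hh by blast
      have "F t1 z / F_theta \<theta> t1 z = K / t1" if "0<z" "z<1" for z
        using K[OF that] that \<open>0<t1\<close> swap_powr[of t1 z \<theta>] by (simp add: F_theta_def)
      then show ?thesis using that by simp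
    qed
    define C where "C = F (1/2) (1/2) / F_theta \<theta> (1/2) (1/2)"
    have FC: "F t1 t2 = C * F_theta \<theta> t1 t2" if "0<t1" "t1<1" "0<t2" "t2<1" for t1 t2
    proof -
      have "F t1 t2 / F_theta \<theta> t1 t2 = C"
        using ratio1[of t1 t2] ratio2[of t2 "1/2"] that unfolding C_def by simp
      then show ?thesis using Fth_pos[of t1 t2] that by (simp add: field_simps)
    qed
    have C1: "C = 1"
    proof -
      define sq where "sq k = 1 - 1 / (real k + 2)" for k :: nat
      have sq_in: "0 < sq k \<and> sq k < 1" for k unfolding sq_def by (simp add: field_simps)
      have sq_mono: "sq k \<le> sq (Suc k)" for k unfolding sq_def by (simp add: field_simps)
      have sq_lim: "sq \<longlonglongrightarrow> 1"
      proof -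
        have "(\<lambda>k. 1 / (real k + 2)) \<longlonglongrightarrow> 0" by real_asymp
        then have "(\<lambda>k. 1 - 1 / (real k + 2)) \<longlonglongrightarrow> 1 - 0" by (intro tendsto_intros)
        then show ?thesis unfolding sq_def[abs_def] by simp
      qed
      have F11: "F 1 1 = 1"
      proof -
        have "((\<lambda>z. if z \<in> {..1} \<times> {..1} then f z else 0) has_integral F 1 1) UNIV"
          using fF[of 1 1] by (simp add: has_integral_restrict_UNIV)
        moreover have "(\<lambda>z. if z \<in> {..1} \<times> {..1} then f z else 0) = f"
        proof
          fix z :: "real \<times> real"
          show "(if z \<in> {..1} \<times> {..1} then f z else 0) = f z"
            using fsupp[of z] by (cases z) auto
        qed
        ultimately show ?thesis using f1 has_integral_unique by metis
      qed
      define fk where "fk k z = (if z \<in> {..sq k} \<times> {..sq k} then f z else 0)" for k z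
      have fk_int: "(fk k has_integral F (sq k) (sq k)) UNIV" for k
        unfolding fk_def[abs_def] using fF[of "sq k" "sq k"] by (simp add: has_integral_restrict_UNIV)
      have mc: "f integrable_on UNIV \<and> ((\<lambda>k. integral UNIV (fk k)) \<longlonglongrightarrow> integral UNIV f)"
      proof (rule monotone_convergence_increasing)
        show "fk k integrable_on UNIV" for k using fk_int by blast
        show "fk k z \<le> fk (Suc k) z" for k z
          using sq_mono[of k] f0[of z] unfolding fk_def by (cases z) auto
        show "(\<lambda>k. fk k z) \<longlonglongrightarrow> f z" for z
        proof (cases "z \<in> {0<..<1} \<times> {0<..<1}")
          case True
          obtain z1 z2 where z: "z = (z1, z2)" by (cases z)
          have "max z1 z2 < 1" using True z by auto
          then have "eventually (\<lambda>k. max z1 z2 < sq k) sequentially"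
            using order_tendstoD(1)[OF sq_lim] by blast
          then have "eventually (\<lambda>k. f z = fk k z) sequentially"
            by eventually_elim (auto simp: fk_def z)
          then show ?thesis by (rule Lim_transform_eventually[OF tendsto_const])
        next
          case False
          then have "fk k z = 0" "f z = 0" for k using fsupp[of z] unfolding fk_def by auto
          then show ?thesis by simp
        qed
        show "bounded (range (\<lambda>k. integral UNIV (fk k)))"
          unfolding bounded_real
        proof (intro exI ballI)
          fix v assume "v \<in> range (\<lambda>k. integral UNIV (fk k))"
          then obtain k where v: "v = F (sq k) (sq k)" using fk_int integral_unique by blast
          have "0 \<le> F (sq k) (sq k)" using F0[of 0 0] Fmono[of 0 "sq k" 0 "sq k"] sq_in[of k] by simp
          moreover have "F (sq k) (sq k) \<le> 1" using F11 Fmono[of "sq k" 1 "sq k" 1] sq_in[of k] by simp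
          ultimately show "\<bar>v\<bar> \<le> 1" using v by simp
        qed
      qed
      have lim1: "(\<lambda>k. F (sq k) (sq k)) \<longlonglongrightarrow> 1"
      proof -
        have "integral UNIV (fk k) = F (sq k) (sq k)" for k using fk_int[of k] by (rule integral_unique)
        then show ?thesis using mc integral_unique[OF f1] by simp
      qed
      have "(\<lambda>k. C * ((sq k) powr (1 + \<theta> * ln (sq k)) * sq k)) \<longlonglongrightarrow> C * (1 powr (1 + \<theta> * ln 1) * 1)"
        by (intro tendsto_intros sq_lim) auto
      then have lim2: "(\<lambda>k. F (sq k) (sq k)) \<longlonglongrightarrow> C"
        using FC sq_in by (simp add: F_theta_def)
      show ?thesis using tendsto_unique[OF _ lim2 lim1] by simp
    qed
    show ?thesis using FC C1 by simp
    qed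
  next
    assume H: "\<forall>t1 t2. 0 < t1 \<and> t1 < 1 \<and> 0 < t2 \<and> t2 < 1 \<longrightarrow> F t1 t2 = F_theta \<theta> t1 t2"
    show "\<forall>t1 t2. 0 < t1 \<and> t1 < 1 \<and> 0 < t2 \<and> t2 < 1 \<longrightarrow>
            cdcpe1 F t1 t2 = ((1 + \<theta> * ln t2) / (2 + \<theta> * ln t2)) * eit1 F t1 t2 \<and>
            cdcpe2 F t1 t2 = ((1 + \<theta> * ln t1) / (2 + \<theta> * ln t1)) * eit2 F t1 t2"
    proof (intro allI impI conjI)
      fix t1 t2 :: real assume t: "0 < t1 \<and> t1 < 1 \<and> 0 < t2 \<and> t2 < 1"
      have e2: "2 + \<theta> * ln t = (1 + \<theta> * ln t) + 1" for t by simp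
      have "- integral {0..t1} (\<lambda>x. F x t2 / F t1 t2 * ln (F x t2 / F t1 t2))
           = ((1 + \<theta> * ln t2)/((1 + \<theta> * ln t2)+1)) * (integral {0..t1} (\<lambda>x. F x t2) / F t1 t2)"
      proof (rule back1[where G = "\<lambda>x. F x t2"])
        show "0 < 1 + \<theta> * ln t2" using ulog[of t2] t by linarith
        show "x \<in> {0..t1} \<Longrightarrow> F x t2 = x powr (1 + \<theta> * ln t2) * t2" for x
          using H t F0[of x t2] by (cases "x = 0") (auto simp: F_theta_def)
      qed (use t in auto)
      then show "cdcpe1 F t1 t2 = ((1 + \<theta> * ln t2) / (2 + \<theta> * ln t2)) * eit1 F t1 t2"
        unfolding cdcpe1_def eit1_def e2 .
      have "- integral {0..t2} (\<lambda>y. F t1 y / F t1 t2 * ln (F t1 y / F t1 t2))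
           = ((1 + \<theta> * ln t1)/((1 + \<theta> * ln t1)+1)) * (integral {0..t2} (\<lambda>y. F t1 y) / F t1 t2)"
      proof (rule back1[where G = "\<lambda>y. F t1 y"])
        show "0 < 1 + \<theta> * ln t1" using ulog[of t1] t by linarith
        show "y \<in> {0..t2} \<Longrightarrow> F t1 y = y powr (1 + \<theta> * ln t1) * t1" for y
          using H t F0[of t1 y] swap_powr[of t1 y \<theta>] by (cases "y = 0") (auto simp: F_theta_def)
      qed (use t in auto)
      then show "cdcpe2 F t1 t2 = ((1 + \<theta> * ln t1) / (2 + \<theta> * ln t1)) * eit2 F t1 t2"
        unfolding cdcpe2_def eit2_def e2 .
    qed
  qed
qed

end
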